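(* Let $K$ be a complete non-archimedean field, $R$ a Banach $K$-algebra, and $R_0\subseteq R_1\subseteq\cdots$ a nested collection of complete subrings of $R$ such that $\bigcup_hR_h$ is dense in $R$. Let $s_1,\dots,s_N\in R\langle\theta_1,\dots,\theta_n\rangle$. For every $\varepsilon>0$ there exist an integer $h$ and elements $\tilde s_1,\dots,\tilde s_N\in R_h\langle\theta_1,\dots,\theta_n\rangle$ such that: (1) $|s_\alpha-\tilde s_\alpha|<\varepsilon$ for each $\alpha$; (2) for all $\alpha,\beta\in\{1,\dots,N\}$ and $k\in\{1,\dots,n\}$ with $s_\alpha|_{\theta_k=0}=s_\beta|_{\theta_k=0}$ one has $\tilde s_\alpha|_{\theta_k=0}=\tilde s_\beta|_{\theta_k=0}$; (3) for all $\alpha,\beta$ and $k$ with $s_\alpha|_{\theta_k=1}=s_\beta|_{\theta_k=1}$ one has $\tilde s_\alpha|_{\theta_k=1}=\tilde s_\beta|_{\theta_k=1}$; (4) for every $\alpha$, if $s_\alpha|_{\theta_1=1}\in R_{h'}\langle\theta_1,\dots,\theta_n\rangle$ for some $h'$, then $\tilde s_\alpha|_{\theta_1=1}=s_\alpha|_{\theta_1=1}$.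
   Context: $R\langle\theta_1,\dots,\theta_n\rangle$ is the ring of strictly convergent power series over $R$ with the Gauss norm $|\sum a_I\theta^I|=\max_I\|a_I\|$, and $R_h\langle\theta\rangle$ is the corresponding subring. $s|_{\theta_k=\epsilon}$ denotes the image of $s$ under the substitution $\theta_k=\epsilon$. *)

theory Defs
  imports Complex_Main
begin

definition cauchy_wrt :: "('a::ab_group_add \<Rightarrow> real) \<Rightarrow> (nat \<Rightarrow> 'a) \<Rightarrow> bool" where
  "cauchy_wrt nm f \<longleftrightarrow> (\<forall>e>0. \<exists>M. \<forall>i\<ge>M. \<forall>j\<ge>M. nm (f i - f j) < e)"

definition conv_to :: "('a::ab_group_add \<Rightarrow> real) \<Rightarrow> (nat \<Rightarrow> 'a) \<Rightarrow> 'a \<Rightarrow> bool" where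
  "conv_to nm f L \<longleftrightarrow> (\<forall>e>0. \<exists>M. \<forall>i\<ge>M. nm (f i - L) < e)"

definition complete_nonarch_field :: "('k::field \<Rightarrow> real) \<Rightarrow> bool" where
  "complete_nonarch_field nk \<longleftrightarrow>
     (\<forall>x. nk x \<ge> 0) \<and> (\<forall>x. nk x = 0 \<longleftrightarrow> x = 0) \<and>
     (\<forall>x y. nk (x * y) = nk x * nk y) \<and>
     (\<forall>x y. nk (x + y) \<le> max (nk x) (nk y)) \<and>
     (\<forall>f. cauchy_wrt nk f \<longrightarrow> (\<exists>L. conv_to nk f L))"

definition banach_algebra :: "('k::field \<Rightarrow> real) \<Rightarrow> ('k \<Rightarrow> 'r::ring_1 \<Rightarrow> 'r) \<Rightarrow> ('r \<Rightarrow> real) \<Rightarrow> bool" where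
  "banach_algebra nk sm nr \<longleftrightarrow>
     (\<forall>x. nr x \<ge> 0) \<and> (\<forall>x. nr x = 0 \<longleftrightarrow> x = 0) \<and>
     (\<forall>x y. nr (x + y) \<le> max (nr x) (nr y)) \<and>
     (\<forall>x y. nr (x * y) \<le> nr x * nr y) \<and>
     (\<forall>a x. nr (sm a x) = nk a * nr x) \<and>
     (\<forall>a b x. sm (a + b) x = sm a x + sm b x) \<and>
     (\<forall>a x y. sm a (x + y) = sm a x + sm a y) \<and>
     (\<forall>a b x. sm (a * b) x = sm a (sm b x)) \<and>
     (\<forall>x. sm 1 x = x) \<and>
     (\<forall>a x y. sm a (x * y) = sm a x * y) \<and>
     (\<forall>a x y. sm a (x * y) = x * sm a y) \<and>
     (\<forall>f. cauchy_wrt nr f \<longrightarrow> (\<exists>L. conv_to nr f L))"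

definition subring_of :: "'r::ring_1 set \<Rightarrow> bool" where
  "subring_of S \<longleftrightarrow> 0 \<in> S \<and> 1 \<in> S \<and>
     (\<forall>x\<in>S. \<forall>y\<in>S. x + y \<in> S \<and> x - y \<in> S \<and> x * y \<in> S)"

definition complete_subring :: "('r::ring_1 \<Rightarrow> real) \<Rightarrow> 'r set \<Rightarrow> bool" where
  "complete_subring nr S \<longleftrightarrow> subring_of S \<and>
     (\<forall>f. (\<forall>i. f i \<in> S) \<longrightarrow> cauchy_wrt nr f \<longrightarrow> (\<exists>L\<in>S. conv_to nr f L))"

text \<open>Multi-indices are functions I :: nat \<Rightarrow> nat; I k is the exponent of theta_k,
  variables are indexed by 1..n. A series is its coefficient function.\<close>

type_synonym 'r pseries = "(nat \<Rightarrow> nat) \<Rightarrow> 'r"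

definition tate :: "('r::ring_1 \<Rightarrow> real) \<Rightarrow> nat \<Rightarrow> 'r set \<Rightarrow> 'r pseries \<Rightarrow> bool" where
  "tate nr n S s \<longleftrightarrow>
     (\<forall>I. s I \<in> S) \<and>
     (\<forall>I. s I \<noteq> 0 \<longrightarrow> (\<forall>i. i \<notin> {1..n} \<longrightarrow> I i = 0)) \<and>
     (\<forall>e>0. finite {I. nr (s I) \<ge> e})"

definition gauss :: "('r \<Rightarrow> real) \<Rightarrow> 'r pseries \<Rightarrow> real" where
  "gauss nr s = Sup (range (\<lambda>I. nr (s I)))"

definition series_sum :: "('r::ring_1 \<Rightarrow> real) \<Rightarrow> (nat \<Rightarrow> 'r) \<Rightarrow> 'r" where
  "series_sum nr f = (THE L. conv_to nr (\<lambda>N. \<Sum>m<N. f m) L)"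

definition subst0 :: "nat \<Rightarrow> 'r::ring_1 pseries \<Rightarrow> 'r pseries" where
  "subst0 k s = (\<lambda>I. if I k = 0 then s I else 0)"

definition subst1 :: "('r::ring_1 \<Rightarrow> real) \<Rightarrow> nat \<Rightarrow> 'r pseries \<Rightarrow> 'r pseries" where
  "subst1 nr k s = (\<lambda>I. if I k = 0 then series_sum nr (\<lambda>m. s (I(k := m))) else 0)"

end

theory Submission
  imports Defs
begin


definition null :: "('r::ring_1 \<Rightarrow> real) \<Rightarrow> (nat \<Rightarrow> 'r) \<Rightarrow> bool" where
  "null nr a \<longleftrightarrow> (\<forall>e>0. \<exists>M. \<forall>m\<ge>M. nr (a m) < e)"

definition fin0 :: "('r::ring_1 \<Rightarrow> real) \<Rightarrow> 'r pseries \<Rightarrow> bool" where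
  "fin0 nr w \<longleftrightarrow> (\<forall>e>0. finite {J. e \<le> nr (w J)})"

definition psi1 :: "(nat \<Rightarrow> 'r::ring_1) \<Rightarrow> nat \<Rightarrow> 'r" where
  "psi1 y m = (if m = 0 then y 0 else if m = 1 then y 1 - y 0 - y 2 else y m - y (Suc m))"

definition phi1 :: "('r::ring_1 \<Rightarrow> real) \<Rightarrow> (nat \<Rightarrow> 'r) \<Rightarrow> nat \<Rightarrow> 'r" where
  "phi1 nr a m = (if m = 0 then a 0 else if m = 1 then series_sum nr a else series_sum nr (\<lambda>j. a (j + m)))"

locale ctx =
  fixes nk :: "'k::field \<Rightarrow> real" and sm :: "'k \<Rightarrow> 'r::ring_1 \<Rightarrow> 'r" and nr :: "'r \<Rightarrow> real"
  assumes F: "complete_nonarch_field nk" and B: "banach_algebra nk sm nr"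
begin

lemma nr_nonneg: "nr x \<ge> 0" using B[unfolded banach_algebra_def, THEN conjunct1] by blast
lemma nr_eq0: "nr x = 0 \<longleftrightarrow> x = 0" using B[unfolded banach_algebra_def, THEN conjunct2, THEN conjunct1] by blast
lemma nr_0[simp]: "nr 0 = 0" using nr_eq0 by blast
lemma ultra: "nr (x + y) \<le> max (nr x) (nr y)" using B[unfolded banach_algebra_def, THEN conjunct2, THEN conjunct2, THEN conjunct1] by blast
lemma complete: "cauchy_wrt nr f \<Longrightarrow> \<exists>L. conv_to nr f L"
proof -
  have "\<forall>f. cauchy_wrt nr f \<longrightarrow> (\<exists>L. conv_to nr f L)" using B unfolding banach_algebra_def by (elim conjE) assumption
  thus "cauchy_wrt nr f \<Longrightarrow> \<exists>L. conv_to nr f L" by blast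
qed

lemma nr_minus[simp]: "nr (- x) = nr x"
proof -
  have sadd: "\<And>a b x. sm (a + b) x = sm a x + sm b x" and s1: "\<And>x. sm 1 x = x"
    and snr: "\<And>a x. nr (sm a x) = nk a * nr x" using B unfolding banach_algebra_def by blast+
  have kmul: "\<And>x y. nk (x * y) = nk x * nk y" and kz: "\<And>x. nk x = 0 \<longleftrightarrow> x = 0"
    and kpos: "\<And>x. nk x \<ge> 0" using F unfolding complete_nonarch_field_def by blast+
  have "sm 0 x = sm (0+0) x" by simp
  hence s0: "sm 0 x = 0" using sadd[of 0 0 x] by simp
  have "sm (-1) x + x = sm ((-1) + 1) x" using sadd[of "-1" 1 x] s1 by simp
  hence sm1: "sm (-1) x = - x" using s0 by (simp add: eq_neg_iff_add_eq_0)
  have "nk 1 = nk 1 * nk 1" using kmul[of 1 1] by simp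
  moreover have "nk 1 \<noteq> 0" using kz by simp
  ultimately have k1: "nk 1 = 1"
    by (metis mult_cancel_left1)
  have "nk (-1) * nk (-1) = 1" using kmul[of "-1" "-1"] k1 by simp
  hence "(nk (-1) - 1) * (nk (-1) + 1) = 0" by (simp add: algebra_simps)
  hence "nk (-1) = 1" using kpos[of "-1"] by auto
  thus ?thesis using snr[of "-1" x] sm1 by simp
qed

lemma nr_sym: "nr (x - y) = nr (y - x)"
proof -
  have "x - y = - (y - x)" by simp
  thus ?thesis by (simp only: nr_minus)
qed

lemma add_lt: "nr x < e \<Longrightarrow> nr y < e \<Longrightarrow> nr (x + y) < e"
  using ultra[of x y] by linarith
lemma diff_lt: "nr x < e \<Longrightarrow> nr y < e \<Longrightarrow> nr (x - y) < e"
  using add_lt[of x e "-y"] by simp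
lemma add_le: "nr x \<le> e \<Longrightarrow> nr y \<le> e \<Longrightarrow> nr (x + y) \<le> e"
  using ultra[of x y] by linarith

lemma sum_lt: "finite A \<Longrightarrow> e > 0 \<Longrightarrow> (\<And>m. m \<in> A \<Longrightarrow> nr (a m) < e) \<Longrightarrow> nr (sum a A) < e"
  by (induction A rule: finite_induct) (auto intro!: add_lt)

lemma conv_unique: "conv_to nr f L \<Longrightarrow> conv_to nr f L' \<Longrightarrow> L = L'"
proof (rule ccontr)
  assume c: "conv_to nr f L" "conv_to nr f L'" "L \<noteq> L'"
  define d where "d = nr (L - L')"
  have d: "d > 0" using c(3) nr_nonneg[of "L - L'"] nr_eq0[of "L - L'"] unfolding d_def by auto
  obtain M1 where M1: "\<forall>i\<ge>M1. nr (f i - L) < d" using c(1) d unfolding conv_to_def by blast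
  obtain M2 where M2: "\<forall>i\<ge>M2. nr (f i - L') < d" using c(2) d unfolding conv_to_def by blast
  have "nr ((f (max M1 M2) - L') - (f (max M1 M2) - L)) < d"
    using M1 M2 diff_lt[of "f (max M1 M2) - L'" d "f (max M1 M2) - L"] by auto
  thus False unfolding d_def by (simp add: algebra_simps)
qed

lemma ssum_eq: assumes c: "conv_to nr (\<lambda>N. \<Sum>m<N. a m) L" shows "series_sum nr a = L"
proof -
  have u: "\<And>L'. conv_to nr (\<lambda>N. \<Sum>m<N. a m) L' \<Longrightarrow> L' = L" using c conv_unique by blast
  show ?thesis unfolding series_sum_def using c u by (rule the_equality)
qed

lemma null_cauchy: assumes "null nr a" shows "cauchy_wrt nr (\<lambda>N. \<Sum>m<N. a m)"
  unfolding cauchy_wrt_def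
proof (intro allI impI)
  fix e :: real assume e: "e > 0"
  obtain M where M: "\<forall>m\<ge>M. nr (a m) < e" using assms e unfolding null_def by blast
  have *: "nr ((\<Sum>m<i. a m) - (\<Sum>m<j. a m)) < e" if "i \<ge> M" "j \<ge> M" "j \<le> i" for i j
  proof -
    have "(\<Sum>m<i. a m) = (\<Sum>m<j. a m) + (\<Sum>m\<in>{j..<i}. a m)"
      using that sum.atLeastLessThan_concat[of 0 j i a] by (simp add: atLeast0LessThan)
    moreover have "nr (\<Sum>m\<in>{j..<i}. a m) < e" using M that e by (intro sum_lt) auto
    ultimately show ?thesis by simp
  qed
  show "\<exists>M. \<forall>i\<ge>M. \<forall>j\<ge>M. nr ((\<Sum>m<i. a m) - (\<Sum>m<j. a m)) < e"
  proof (intro exI allI impI)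
    fix i j assume ij: "M \<le> i" "M \<le> j"
    show "nr ((\<Sum>m<i. a m) - (\<Sum>m<j. a m)) < e"
    proof (cases "j \<le> i")
      case True thus ?thesis using * ij by blast
    next
      case False
      hence "nr ((\<Sum>m<j. a m) - (\<Sum>m<i. a m)) < e" using *[of j i] ij by simp
      thus ?thesis by (subst nr_sym)
    qed
  qed
qed

lemma ssum_conv: "null nr a \<Longrightarrow> conv_to nr (\<lambda>N. \<Sum>m<N. a m) (series_sum nr a)"
proof -
  assume "null nr a"
  then obtain L where "conv_to nr (\<lambda>N. \<Sum>m<N. a m) L" using complete[OF null_cauchy] by blast
  thus ?thesis using ssum_eq by simp
qed

lemma ssum_in: assumes S: "complete_subring nr S" and a: "\<And>m. a m \<in> S" and n: "null nr a"
  shows "series_sum nr a \<in> S"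
proof -
  have sub: "subring_of S" using S unfolding complete_subring_def by blast
  have z: "0 \<in> S" and ad: "\<And>x y. x \<in> S \<Longrightarrow> y \<in> S \<Longrightarrow> x + y \<in> S"
    using sub unfolding subring_of_def by blast+
  have "(\<Sum>m<N. a m) \<in> S" for N
  proof (induction N)
    case 0 thus ?case using z by simp
  next
    case (Suc N) thus ?case using ad a by simp
  qed
  have cS: "\<And>f. (\<forall>i. f i \<in> S) \<Longrightarrow> cauchy_wrt nr f \<Longrightarrow> (\<exists>L\<in>S. conv_to nr f L)"
    using S unfolding complete_subring_def by blast
  obtain L where "L \<in> S" "conv_to nr (\<lambda>N. \<Sum>m<N. a m) L"
    using cS[of "\<lambda>N. \<Sum>m<N. a m", OF _ null_cauchy[OF n]] \<open>\<And>N. (\<Sum>m<N. a m) \<in> S\<close> by blast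
  thus ?thesis using ssum_eq by simp
qed

lemma ssum_lt: assumes n: "null nr a" and e: "e > 0" and b: "\<And>m. nr (a m) < e"
  shows "nr (series_sum nr a) < e"
proof -
  have "\<exists>M. \<forall>i\<ge>M. nr ((\<Sum>m<i. a m) - series_sum nr a) < e"
    using ssum_conv[OF n] e unfolding conv_to_def by blast
  then obtain M where M: "nr ((\<Sum>m<M. a m) - series_sum nr a) < e" by blast
  have "nr (\<Sum>m<M. a m) < e" using b e by (intro sum_lt) auto
  hence "nr ((\<Sum>m<M. a m) - ((\<Sum>m<M. a m) - series_sum nr a)) < e" using M by (rule diff_lt)
  thus ?thesis by simp
qed


lemma null_shift: "null nr a \<Longrightarrow> null nr (\<lambda>j. a (j + c))"
  unfolding null_def
proof (intro allI impI)
  fix e :: real assume a: "\<forall>e>0. \<exists>M. \<forall>m\<ge>M. nr (a m) < e" and e: "e > 0"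
  obtain M where M: "\<forall>m\<ge>M. nr (a m) < e" using a e by blast
  show "\<exists>M. \<forall>m\<ge>M. nr (a (m + c)) < e"
    by (rule exI[of _ M]) (use M in simp)
qed

lemma ssum_zero: "series_sum nr (\<lambda>_. 0) = 0"
  by (rule ssum_eq) (simp add: conv_to_def)

lemma ssum_shift: assumes n: "null nr a"
  shows "series_sum nr a = a 0 + series_sum nr (\<lambda>j. a (Suc j))"
proof -
  have "conv_to nr (\<lambda>N. \<Sum>m<N. a (Suc m)) (series_sum nr a - a 0)"
    unfolding conv_to_def
  proof (intro allI impI)
    fix e :: real assume e: "e > 0"
    obtain M where M: "\<forall>i\<ge>M. nr ((\<Sum>m<i. a m) - series_sum nr a) < e"
      using ssum_conv[OF n] e unfolding conv_to_def by blast
    show "\<exists>M. \<forall>i\<ge>M. nr ((\<Sum>m<i. a (Suc m)) - (series_sum nr a - a 0)) < e"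
    proof (intro exI allI impI)
      fix i assume "M \<le> i"
      hence M': "nr ((\<Sum>m<Suc i. a m) - series_sum nr a) < e" using M[rule_format, OF le_SucI] by blast
      have eq: "(\<Sum>m<Suc i. a m) - series_sum nr a = (\<Sum>m<i. a (Suc m)) - (series_sum nr a - a 0)"
        by (simp only: sum.lessThan_Suc_shift) (simp add: algebra_simps)
      show "nr ((\<Sum>m<i. a (Suc m)) - (series_sum nr a - a 0)) < e" using M' eq by (simp only:)
    qed
  qed
  hence "series_sum nr (\<lambda>j. a (Suc j)) = series_sum nr a - a 0" by (rule ssum_eq)
  thus ?thesis by simp
qed

lemma ssum_tail: assumes n: "null nr a"
  shows "series_sum nr (\<lambda>j. a (j + m)) = a m + series_sum nr (\<lambda>j. a (j + Suc m))"
  using ssum_shift[OF null_shift[OF n, of m]] by simp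

lemma ssum_telescope: assumes n: "null nr y"
  shows "series_sum nr (\<lambda>j. y (j + c) - y (Suc (j + c))) = y c"
proof (rule ssum_eq)
  show "conv_to nr (\<lambda>N. \<Sum>j<N. y (j + c) - y (Suc (j + c))) (y c)"
    unfolding conv_to_def
  proof (intro allI impI)
    fix e :: real assume e: "e > 0"
    obtain M where M: "\<forall>m\<ge>M. nr (y m) < e" using n e unfolding null_def by blast
    show "\<exists>M. \<forall>i\<ge>M. nr ((\<Sum>j<i. y (j + c) - y (Suc (j + c))) - y c) < e"
    proof (intro exI allI impI)
      fix i assume i: "M \<le> i"
      have "(\<Sum>j<i. y (j + c) - y (Suc (j + c))) = y (0 + c) - y (i + c)"
        using sum_lessThan_telescope'[of "\<lambda>j. y (j + c)" i] by simp
      hence "(\<Sum>j<i. y (j + c) - y (Suc (j + c))) - y c = - y (i + c)" by simp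
      thus "nr ((\<Sum>j<i. y (j + c) - y (Suc (j + c))) - y c) < e" using M i by simp
    qed
  qed
qed

lemma ssum_diff: assumes a: "null nr a" and b: "null nr b"
  shows "series_sum nr (\<lambda>m. a m - b m) = series_sum nr a - series_sum nr b"
proof (rule ssum_eq)
  show "conv_to nr (\<lambda>N. \<Sum>m<N. a m - b m) (series_sum nr a - series_sum nr b)"
    unfolding conv_to_def
  proof (intro allI impI)
    fix e :: real assume e: "e > 0"
    obtain M1 where M1: "\<forall>i\<ge>M1. nr ((\<Sum>m<i. a m) - series_sum nr a) < e"
      using ssum_conv[OF a] e unfolding conv_to_def by blast
    obtain M2 where M2: "\<forall>i\<ge>M2. nr ((\<Sum>m<i. b m) - series_sum nr b) < e"
      using ssum_conv[OF b] e unfolding conv_to_def by blast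
    show "\<exists>M. \<forall>i\<ge>M. nr ((\<Sum>m<i. a m - b m) - (series_sum nr a - series_sum nr b)) < e"
    proof (intro exI allI impI)
      fix i assume i: "max M1 M2 \<le> i"
      have i12: "M1 \<le> i" "M2 \<le> i" using i by auto
      have "nr (((\<Sum>m<i. a m) - series_sum nr a) - ((\<Sum>m<i. b m) - series_sum nr b)) < e"
        using diff_lt[OF M1[rule_format, OF i12(1)] M2[rule_format, OF i12(2)]] .
      moreover have "((\<Sum>m<i. a m) - series_sum nr a) - ((\<Sum>m<i. b m) - series_sum nr b)
          = (\<Sum>m<i. a m - b m) - (series_sum nr a - series_sum nr b)"
        by (simp add: sum_subtractf algebra_simps)
      ultimately show "nr ((\<Sum>m<i. a m - b m) - (series_sum nr a - series_sum nr b)) < e" by simp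
    qed
  qed
qed

lemma null_diff: "null nr a \<Longrightarrow> null nr b \<Longrightarrow> null nr (\<lambda>m. a m - b m)"
  unfolding null_def
proof (intro allI impI)
  fix e :: real assume a: "\<forall>e>0. \<exists>M. \<forall>m\<ge>M. nr (a m) < e" and b: "\<forall>e>0. \<exists>M. \<forall>m\<ge>M. nr (b m) < e" and e: "e > 0"
  obtain M1 where M1: "\<forall>m\<ge>M1. nr (a m) < e" using a e by blast
  obtain M2 where M2: "\<forall>m\<ge>M2. nr (b m) < e" using b e by blast
  show "\<exists>M. \<forall>m\<ge>M. nr (a m - b m) < e"
  proof (intro exI allI impI)
    fix m assume "max M1 M2 \<le> m"
    hence i12: "M1 \<le> m" "M2 \<le> m" by auto
    show "nr (a m - b m) < e" using diff_lt[OF M1[rule_format, OF i12(1)] M2[rule_format, OF i12(2)]] .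
  qed
qed

lemma null_psi1: assumes n: "null nr y" shows "null nr (psi1 y)"
proof -
  have "null nr (\<lambda>m. y m - y (Suc m))"
    using null_diff[OF n null_shift[OF n, of 1]] by simp
  show ?thesis unfolding null_def
  proof (intro allI impI)
    fix e :: real assume e: "e > 0"
    obtain M where M: "\<forall>m\<ge>M. nr (y m - y (Suc m)) < e" using \<open>null nr (\<lambda>m. y m - y (Suc m))\<close> e unfolding null_def by blast
    show "\<exists>M. \<forall>m\<ge>M. nr (psi1 y m) < e"
    proof (intro exI allI impI)
      fix m assume "max M 2 \<le> m"
      hence "M \<le> m" "m \<ge> 2" by auto
      thus "nr (psi1 y m) < e" using M by (simp add: psi1_def)
    qed
  qed
qed

lemma ssum_psi1: assumes n: "null nr y" shows "series_sum nr (psi1 y) = y 1"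
proof -
  have np: "null nr (psi1 y)" using null_psi1[OF n] .
  have "series_sum nr (psi1 y) = psi1 y 0 + (psi1 y 1 + series_sum nr (\<lambda>j. psi1 y (j + 2)))"
    using ssum_tail[OF np, of 0] ssum_tail[OF np, of 1] by (simp add: numeral_2_eq_2)
  moreover have "(\<lambda>j. psi1 y (j + 2)) = (\<lambda>j. y (j + 2) - y (Suc (j + 2)))"
    by (auto simp: psi1_def)
  ultimately show ?thesis using ssum_telescope[OF n, of 2] by (simp add: psi1_def)
qed

lemma phi1_psi1: assumes n: "null nr y" shows "phi1 nr (psi1 y) m = y m"
proof -
  consider "m = 0" | "m = 1" | "m \<ge> 2" by linarith
  thus ?thesis
  proof cases
    case 1 thus ?thesis by (simp add: phi1_def psi1_def)
  next
    case 2 thus ?thesis using ssum_psi1[OF n] by (simp add: phi1_def)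
  next
    case 3
    have "(\<lambda>j. psi1 y (j + m)) = (\<lambda>j. y (j + m) - y (Suc (j + m)))"
      using 3 by (auto simp: psi1_def)
    thus ?thesis using 3 ssum_telescope[OF n, of m] by (simp add: phi1_def)
  qed
qed

lemma psi1_phi1: assumes n: "null nr a" shows "psi1 (phi1 nr a) m = a m"
proof -
  have t: "\<And>m. series_sum nr (\<lambda>j. a (j + m)) = a m + series_sum nr (\<lambda>j. a (j + Suc m))"
    using ssum_tail[OF n] .
  have t0: "series_sum nr a = a 0 + (a 1 + series_sum nr (\<lambda>j. a (j + 2)))"
    using t[of 0] t[of 1] by (simp add: numeral_2_eq_2)
  consider "m = 0" | "m = 1" | "m \<ge> 2" by linarith
  thus ?thesis
  proof cases
    case 1 thus ?thesis by (simp add: phi1_def psi1_def)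
  next
    case 2 thus ?thesis using t0 by (simp add: phi1_def psi1_def)
  next
    case 3 thus ?thesis using t[of m] by (simp add: phi1_def psi1_def)
  qed
qed

end



definition Psi :: "nat \<Rightarrow> 'r::ring_1 pseries \<Rightarrow> 'r pseries" where
  "Psi k y J = psi1 (\<lambda>m. y (J(k:=m))) (J k)"
definition Phi :: "('r::ring_1 \<Rightarrow> real) \<Rightarrow> nat \<Rightarrow> 'r pseries \<Rightarrow> 'r pseries" where
  "Phi nr k f J = phi1 nr (\<lambda>m. f (J(k:=m))) (J k)"
primrec PsiL :: "nat list \<Rightarrow> 'r::ring_1 pseries \<Rightarrow> 'r pseries" where
  "PsiL [] y = y" | "PsiL (j#js) y = PsiL js (Psi j y)"
primrec PhiL :: "('r::ring_1 \<Rightarrow> real) \<Rightarrow> nat list \<Rightarrow> 'r pseries \<Rightarrow> 'r pseries" where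
  "PhiL nr [] f = f" | "PhiL nr (j#js) f = Phi nr j (PhiL nr js f)"
definition R1 :: "nat \<Rightarrow> 'r::ring_1 pseries \<Rightarrow> 'r pseries" where
  "R1 k z = (\<lambda>I. if I k = 0 then z (I(k:=1)) else 0)"
definition supp :: "nat \<Rightarrow> 'r::ring_1 pseries \<Rightarrow> bool" where
  "supp n w \<longleftrightarrow> (\<forall>J. w J \<noteq> 0 \<longrightarrow> (\<forall>i. i \<notin> {1..n} \<longrightarrow> J i = 0))"

lemma upd_upd[simp]: "(J(k:=m))(k:=i) = J(k:=i)" by simp

lemma line_Psi: "(\<lambda>m. Psi k y (J(k:=m))) = psi1 (\<lambda>m. y (J(k:=m)))"
  by (rule ext) (simp add: Psi_def)
lemma line_Phi: "(\<lambda>m. Phi nr k f (J(k:=m))) = phi1 nr (\<lambda>m. f (J(k:=m)))"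
  by (rule ext) (simp add: Phi_def)

lemma PsiL_append: "PsiL (xs @ ys) y = PsiL ys (PsiL xs y)"
  by (induction xs arbitrary: y) auto

lemma psi1_zero: "psi1 (\<lambda>_. 0) m = 0" by (simp add: psi1_def)

context ctx begin

lemma fin0_null: assumes "fin0 nr w" shows "null nr (\<lambda>m. w (J(k:=m)))"
  unfolding null_def
proof (intro allI impI)
  fix e :: real assume e: "e > 0"
  have inj: "inj (\<lambda>m. J(k:=m))" by (rule injI) (metis fun_upd_same)
  have "finite ((\<lambda>m. J(k:=m)) -` {J. e \<le> nr (w J)})"
    using assms e unfolding fin0_def by (intro finite_vimageI inj) auto
  then obtain M where M: "\<forall>m\<in>(\<lambda>m. J(k:=m)) -` {J. e \<le> nr (w J)}. m < M"
    using finite_nat_set_iff_bounded by blast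
  show "\<exists>M. \<forall>m\<ge>M. nr (w (J(k:=m))) < e"
  proof (intro exI allI impI)
    fix m assume "M \<le> m"
    hence "m \<notin> (\<lambda>m. J(k:=m)) -` {J. e \<le> nr (w J)}" using M by (meson not_less)
    thus "nr (w (J(k:=m))) < e" by simp
  qed
qed

lemma Phi_Psi: assumes "\<And>J. null nr (\<lambda>m. y (J(k:=m)))" shows "Phi nr k (Psi k y) = y"
proof (rule ext)
  fix J
  have "Phi nr k (Psi k y) J = phi1 nr (psi1 (\<lambda>m. y (J(k:=m)))) (J k)"
    unfolding Phi_def line_Psi ..
  also have "\<dots> = y (J(k := J k))" using phi1_psi1[OF assms[of J]] by simp
  finally show "Phi nr k (Psi k y) J = y J" by simp
qed

lemma Psi_Phi: assumes "\<And>J. null nr (\<lambda>m. f (J(k:=m)))" shows "Psi k (Phi nr k f) = f"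
proof (rule ext)
  fix J
  have "Psi k (Phi nr k f) J = psi1 (phi1 nr (\<lambda>m. f (J(k:=m)))) (J k)"
    unfolding Psi_def line_Phi ..
  also have "\<dots> = f (J(k := J k))" using psi1_phi1[OF assms[of J]] by simp
  finally show "Psi k (Phi nr k f) J = f J" by simp
qed

lemma fin0_Psi: assumes f: "fin0 nr y" shows "fin0 nr (Psi k y)"
  unfolding fin0_def
proof (intro allI impI)
  fix e :: real assume e: "e > 0"
  define A where "A = {J. e \<le> nr (y J)}"
  have fA: "finite A" using f e unfolding fin0_def A_def by blast
  have inj: "inj (\<lambda>J::nat\<Rightarrow>nat. J(k:=Suc (J k)))"
  proof (rule injI)
    fix J J' :: "nat \<Rightarrow> nat" assume h: "J(k:=Suc (J k)) = J'(k:=Suc (J' k))"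
    show "J = J'"
    proof (rule ext)
      fix i show "J i = J' i"
        using fun_cong[OF h, of i] fun_cong[OF h, of k] by (cases "i = k") auto
    qed
  qed
  have sub: "{J. e \<le> nr (Psi k y J)} \<subseteq> A \<union> (\<lambda>J. J(k:=Suc (J k))) -` A \<union> (\<lambda>I. I(k:=1)) ` A"
  proof
    fix J assume "J \<in> {J. e \<le> nr (Psi k y J)}"
    hence h: "e \<le> nr (Psi k y J)" by simp
    consider "J k = 0" | "J k = 1" | "J k \<ge> 2" by linarith
    thus "J \<in> A \<union> (\<lambda>J. J(k:=Suc (J k))) -` A \<union> (\<lambda>I. I(k:=1)) ` A"
    proof cases
      case 1
      hence "J(k:=0) = J" by auto
      thus ?thesis using h 1 by (simp add: Psi_def psi1_def A_def)
    next
      case 2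
      hence jj: "J(k:=Suc 0) = J" by auto
      hence v: "Psi k y J = y J - y (J(k:=0)) - y (J(k:=Suc (J k)))"
        using 2 by (simp add: Psi_def psi1_def numeral_2_eq_2)
      show ?thesis
      proof (rule ccontr)
        assume "\<not> ?thesis"
        hence "nr (y J) < e" "nr (y (J(k:=Suc (J k)))) < e" "J \<notin> (\<lambda>I. I(k:=1)) ` A"
          by (auto simp: A_def)
        moreover have "J = (J(k:=0))(k:=1)" using 2 by auto
        ultimately have "nr (y (J(k:=0))) < e" unfolding A_def by (metis (mono_tags, lifting) image_eqI mem_Collect_eq not_le)
        hence "nr (Psi k y J) < e" unfolding v
          using \<open>nr (y J) < e\<close> \<open>nr (y (J(k:=Suc (J k)))) < e\<close> by (intro diff_lt)
        thus False using h by simp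
      qed
    next
      case 3
      hence v: "Psi k y J = y J - y (J(k:=Suc (J k)))"
        by (simp add: Psi_def psi1_def)
      show ?thesis
      proof (rule ccontr)
        assume "\<not> ?thesis"
        hence "nr (y J) < e" "nr (y (J(k:=Suc (J k)))) < e"
          by (auto simp: A_def)
        hence "nr (Psi k y J) < e" unfolding v by (intro diff_lt)
        thus False using h by simp
      qed
    qed
  qed
  have "finite (A \<union> (\<lambda>J. J(k:=Suc (J k))) -` A \<union> (\<lambda>I. I(k:=1)) ` A)"
    using fA inj by (simp add: finite_vimageI)
  thus "finite {J. e \<le> nr (Psi k y J)}" using sub finite_subset by blast
qed

lemma fin0_Phi: assumes f: "fin0 nr f" shows "fin0 nr (Phi nr k f)"
  unfolding fin0_def
proof (intro allI impI)
  fix e :: real assume e: "e > 0"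
  define A where "A = {J. e \<le> nr (f J)}"
  have fA: "finite A" using f e unfolding fin0_def A_def by blast
  have sub: "{J. e \<le> nr (Phi nr k f J)} \<subseteq> (\<Union>I\<in>A. (\<lambda>c. I(k:=c)) ` {..Suc (I k)})"
  proof
    fix J assume "J \<in> {J. e \<le> nr (Phi nr k f J)}"
    hence h: "e \<le> nr (Phi nr k f J)" by simp
    have n: "null nr (\<lambda>m. f (J(k:=m)))" using fin0_null[OF f] .
    have "\<exists>m. e \<le> nr (f (J(k:=m))) \<and> J k \<le> Suc m"
    proof -
      consider "J k = 0" | "J k = 1" | "J k \<ge> 2" by linarith
      thus ?thesis
      proof cases
        case 1 thus ?thesis using h by (intro exI[of _ 0]) (simp add: Phi_def phi1_def)
      next
        case 2
        hence "e \<le> nr (series_sum nr (\<lambda>m. f (J(k:=m))))" using h by (simp add: Phi_def phi1_def)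
        hence "\<not> (\<forall>m. nr (f (J(k:=m))) < e)" using ssum_lt[OF n e] by force
        thus ?thesis using 2 by (auto simp: not_less)
      next
        case 3
        hence "e \<le> nr (series_sum nr (\<lambda>j. f (J(k:=j + J k))))" using h by (simp add: Phi_def phi1_def)
        hence "\<not> (\<forall>j. nr (f (J(k:=j + J k))) < e)" using ssum_lt[OF null_shift[OF n] e] by force
        then obtain j where "e \<le> nr (f (J(k:=j + J k)))" by (auto simp: not_less)
        thus ?thesis by (intro exI[of _ "j + J k"]) simp
      qed
    qed
    then obtain m where m: "e \<le> nr (f (J(k:=m)))" "J k \<le> Suc m" by blast
    have "J(k:=m) \<in> A" using m(1) by (simp add: A_def)
    moreover have "J = (\<lambda>c. (J(k:=m))(k:=c)) (J k)" by simp
    moreover have "J k \<in> {..Suc ((J(k:=m)) k)}" using m(2) by simp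
    ultimately show "J \<in> (\<Union>I\<in>A. (\<lambda>c. I(k:=c)) ` {..Suc (I k)})" by blast
  qed
  have "finite (\<Union>I\<in>A. (\<lambda>c. I(k:=c)) ` {..Suc (I k)})" using fA by blast
  thus "finite {J. e \<le> nr (Phi nr k f J)}" using sub finite_subset by blast
qed

end



lemma Psi_diff: "Psi k (\<lambda>J. x J - y J) = (\<lambda>J. Psi k x J - Psi k y J)"
  by (rule ext) (simp add: Psi_def psi1_def algebra_simps)

lemma PsiL_diff: "PsiL js (\<lambda>J. x J - y J) = (\<lambda>J. PsiL js x J - PsiL js y J)"
  by (induction js arbitrary: x y) (auto simp: Psi_diff)

lemma Psi_in: assumes S: "subring_of S" and y: "\<And>J. y J \<in> S" shows "Psi k y J \<in> S"
  using S y unfolding subring_of_def Psi_def psi1_def by simp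

lemma PsiL_in: assumes S: "subring_of S" and y: "\<And>J. y J \<in> S" shows "PsiL js y J \<in> S"
  using y
proof (induction js arbitrary: y)
  case Nil thus ?case by simp
next
  case (Cons j js) thus ?case using Psi_in[OF S] by simp
qed

lemma R1_Psi: "j \<noteq> k \<Longrightarrow> R1 k (Psi j z) = Psi j (R1 k z)"
  by (rule ext) (auto simp: R1_def Psi_def fun_upd_twist psi1_def)

lemma R1_PsiL: "k \<notin> set js \<Longrightarrow> R1 k (PsiL js z) = PsiL js (R1 k z)"
  by (induction js arbitrary: z) (auto simp: R1_Psi)

lemma agree_Psi: assumes "\<forall>J. J k = 0 \<longrightarrow> x J = y J"
  shows "\<forall>J. J k = 0 \<longrightarrow> Psi j x J = Psi j y J"
proof (intro allI impI)
  fix J :: "nat \<Rightarrow> nat" assume J: "J k = 0"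
  show "Psi j x J = Psi j y J"
  proof (cases "j = k")
    case True thus ?thesis using assms J by (simp add: Psi_def psi1_def)
  next
    case False
    hence "(\<lambda>m. x (J(j:=m))) = (\<lambda>m. y (J(j:=m)))" using assms J by auto
    thus ?thesis by (simp add: Psi_def)
  qed
qed

lemma agree_PsiL: assumes "\<forall>J. J k = 0 \<longrightarrow> x J = y J"
  shows "\<forall>J. J k = 0 \<longrightarrow> PsiL js x J = PsiL js y J"
  using assms
proof (induction js arbitrary: x y)
  case Nil thus ?case by simp
next
  case (Cons j js) thus ?case using agree_Psi[OF Cons.prems] by simp
qed

lemma agree_Phi: assumes "\<forall>J. J k = 0 \<longrightarrow> x J = y J"
  shows "\<forall>J. J k = 0 \<longrightarrow> Phi nr j x J = Phi nr j y J"
proof (intro allI impI)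
  fix J :: "nat \<Rightarrow> nat" assume J: "J k = 0"
  show "Phi nr j x J = Phi nr j y J"
  proof (cases "j = k")
    case True thus ?thesis using assms J by (simp add: Phi_def phi1_def)
  next
    case False
    hence "(\<lambda>m. x (J(j:=m))) = (\<lambda>m. y (J(j:=m)))" using assms J by auto
    thus ?thesis by (simp add: Phi_def)
  qed
qed

lemma agree_PhiL: assumes "\<forall>J. J k = 0 \<longrightarrow> x J = y J"
  shows "\<forall>J. J k = 0 \<longrightarrow> PhiL nr js x J = PhiL nr js y J"
  using assms
proof (induction js arbitrary: x y)
  case Nil thus ?case by simp
next
  case (Cons j js) thus ?case using agree_Phi[OF Cons.IH[OF Cons.prems]] by simp
qed

lemma supp_Psi: assumes k: "k \<in> {1..n}" and s: "supp n y" shows "supp n (Psi k y)"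
  unfolding supp_def
proof (intro allI impI)
  fix J i assume nz: "Psi k y J \<noteq> 0" and i: "i \<notin> {1..n}"
  show "J i = 0"
  proof (rule ccontr)
    assume Ji: "J i \<noteq> 0"
    have "i \<noteq> k" using i k by auto
    hence "\<And>m. y (J(k:=m)) = 0" using s Ji i unfolding supp_def by (metis fun_upd_other)
    hence "Psi k y J = 0" by (simp add: Psi_def psi1_def)
    thus False using nz by simp
  qed
qed

lemma supp_PsiL: assumes k: "set js \<subseteq> {1..n}" and s: "supp n y" shows "supp n (PsiL js y)"
  using assms
proof (induction js arbitrary: y)
  case Nil thus ?case by simp
next
  case (Cons j js)
  have "supp n (Psi j y)" using supp_Psi[of j n y] Cons.prems by simp
  thus ?case using Cons.IH Cons.prems by simp
qed

context ctx begin

lemma Phi_in: assumes S: "complete_subring nr S" and y: "\<And>J. f J \<in> S"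
  and n: "\<And>J. null nr (\<lambda>m. f (J(k:=m)))" shows "Phi nr k f J \<in> S"
  unfolding Phi_def phi1_def
  using ssum_in[OF S _ n] ssum_in[OF S _ null_shift[OF n]] y by simp

lemma supp_Phi: assumes k: "k \<in> {1..n}" and s: "supp n f" shows "supp n (Phi nr k f)"
  unfolding supp_def
proof (intro allI impI)
  fix J i assume nz: "Phi nr k f J \<noteq> 0" and i: "i \<notin> {1..n}"
  show "J i = 0"
  proof (rule ccontr)
    assume Ji: "J i \<noteq> 0"
    have "i \<noteq> k" using i k by auto
    hence "\<And>m. f (J(k:=m)) = 0" using s Ji i unfolding supp_def by (metis fun_upd_other)
    hence "Phi nr k f J = 0" by (simp add: Phi_def phi1_def ssum_zero)
    thus False using nz by simp
  qed
qed

lemma supp_PhiL: assumes k: "set js \<subseteq> {1..n}" and s: "supp n y" shows "supp n (PhiL nr js y)"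
  using assms
proof (induction js arbitrary: y)
  case Nil thus ?case by simp
next
  case (Cons j js) thus ?case using supp_Phi by simp
qed

lemma Psi_lt: assumes "\<And>J. nr (w J) < d" shows "nr (Psi k w J) < d"
  unfolding Psi_def psi1_def using assms by (auto intro!: diff_lt)

lemma PsiL_lt: assumes "\<And>J. nr (w J) < d" shows "nr (PsiL js w J) < d"
  using assms
proof (induction js arbitrary: w)
  case Nil thus ?case by simp
next
  case (Cons j js) thus ?case using Psi_lt by simp
qed

lemma fin0_PsiL: "fin0 nr y \<Longrightarrow> fin0 nr (PsiL js y)"
  by (induction js arbitrary: y) (auto simp: fin0_Psi)

lemma fin0_PhiL: "fin0 nr y \<Longrightarrow> fin0 nr (PhiL nr js y)"
  by (induction js arbitrary: y) (auto simp: fin0_Phi)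

lemma PhiL_PsiL: "fin0 nr y \<Longrightarrow> PhiL nr js (PsiL js y) = y"
proof (induction js arbitrary: y)
  case Nil thus ?case by simp
next
  case (Cons j js)
  have "PhiL nr (j#js) (PsiL (j#js) y) = Phi nr j (PhiL nr js (PsiL js (Psi j y)))" by simp
  also have "\<dots> = Phi nr j (Psi j y)" using Cons.IH[OF fin0_Psi[OF Cons.prems]] by simp
  also have "\<dots> = y" using Phi_Psi fin0_null[OF Cons.prems] by blast
  finally show ?case .
qed

lemma PsiL_PhiL: "fin0 nr f \<Longrightarrow> PsiL js (PhiL nr js f) = f"
proof (induction js arbitrary: f)
  case Nil thus ?case by simp
next
  case (Cons j js)
  have "PsiL (j#js) (PhiL nr (j#js) f) = PsiL js (Psi j (Phi nr j (PhiL nr js f)))" by simp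
  also have "\<dots> = PsiL js (PhiL nr js f)" using Psi_Phi fin0_null[OF fin0_PhiL[OF Cons.prems]] by metis
  also have "\<dots> = f" using Cons.IH[OF Cons.prems] .
  finally show ?case .
qed

lemma PhiL_in: assumes S: "complete_subring nr S" and y: "\<And>J. f J \<in> S" and f: "fin0 nr f"
  shows "PhiL nr js f J \<in> S"
  using y f
proof (induction js arbitrary: J)
  case Nil thus ?case by simp
next
  case (Cons j js) thus ?case using Phi_in[OF S] fin0_null[OF fin0_PhiL[OF f]] by simp
qed

lemma ssum_psi1_lines: assumes n: "\<And>c. null nr (l c)"
  shows "series_sum nr (\<lambda>m. psi1 (\<lambda>c. l c m) i) = psi1 (\<lambda>c. series_sum nr (l c)) i"
proof -
  consider "i = 0" | "i = 1" | "i \<ge> 2" by linarith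
  thus ?thesis
  proof cases
    case 1 thus ?thesis by (simp add: psi1_def)
  next
    case 2
    have "series_sum nr (\<lambda>m. l 1 m - l 0 m - l 2 m) = series_sum nr (\<lambda>m. l 1 m - l 0 m) - series_sum nr (l 2)"
      using ssum_diff[OF null_diff[OF n n] n] by simp
    also have "\<dots> = series_sum nr (l 1) - series_sum nr (l 0) - series_sum nr (l 2)"
      using ssum_diff[OF n n] by simp
    finally show ?thesis using 2 by (simp add: psi1_def)
  next
    case 3 thus ?thesis using ssum_diff[OF n n] by (simp add: psi1_def)
  qed
qed

lemma subst1_Psi_other: assumes jk: "j \<noteq> k" and f: "fin0 nr w"
  shows "subst1 nr k (Psi j w) = Psi j (subst1 nr k w)"
proof (rule ext)
  fix I :: "nat \<Rightarrow> nat"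
  show "subst1 nr k (Psi j w) I = Psi j (subst1 nr k w) I"
  proof (cases "I k = 0")
    case True
    define l where "l c = (\<lambda>m. w (I(j:=c, k:=m)))" for c
    have n: "\<And>c. null nr (l c)" unfolding l_def using fin0_null[OF f] by simp
    have "subst1 nr k (Psi j w) I = series_sum nr (\<lambda>m. psi1 (\<lambda>c. l c m) (I j))"
      using True jk unfolding subst1_def Psi_def l_def by (simp add: fun_upd_twist)
    also have "\<dots> = psi1 (\<lambda>c. series_sum nr (l c)) (I j)" using ssum_psi1_lines[OF n] .
    also have "\<dots> = Psi j (subst1 nr k w) I"
      using True jk unfolding subst1_def Psi_def l_def by simp
    finally show ?thesis .
  next
    case False
    hence "\<And>c. subst1 nr k w (I(j:=c)) = 0" using jk by (simp add: subst1_def)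
    thus ?thesis using False by (simp add: subst1_def Psi_def psi1_def)
  qed
qed

lemma subst1_PsiL_other: assumes "k \<notin> set js" and "fin0 nr w"
  shows "subst1 nr k (PsiL js w) = PsiL js (subst1 nr k w)"
  using assms
proof (induction js arbitrary: w)
  case Nil thus ?case by simp
next
  case (Cons j js)
  thus ?case using subst1_Psi_other[of j k w] fin0_Psi by simp
qed

lemma subst1_Psi_same: assumes f: "fin0 nr z"
  shows "subst1 nr k (Psi k z) = R1 k z"
proof (rule ext)
  fix I :: "nat \<Rightarrow> nat"
  show "subst1 nr k (Psi k z) I = R1 k z I"
    unfolding subst1_def R1_def line_Psi using ssum_psi1[OF fin0_null[OF f]] by simp
qed

lemma fin0_R1: assumes f: "fin0 nr z" shows "fin0 nr (R1 k z)"
  unfolding fin0_def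
proof (intro allI impI)
  fix e :: real assume e: "e > 0"
  define A where "A = {J. e \<le> nr (z J)}"
  have fA: "finite A" using f e unfolding fin0_def A_def by blast
  have "{J. e \<le> nr (R1 k z J)} \<subseteq> (\<lambda>J. J(k:=0)) ` A"
  proof
    fix J assume "J \<in> {J. e \<le> nr (R1 k z J)}"
    hence h: "e \<le> nr (R1 k z J)" by simp
    have "J k = 0" using h e by (auto simp: R1_def split: if_splits)
    hence "J = (J(k:=1))(k:=0)" by auto
    moreover have "J(k:=1) \<in> A" using h \<open>J k = 0\<close> by (simp add: R1_def A_def)
    ultimately show "J \<in> (\<lambda>J. J(k:=0)) ` A" by blast
  qed
  thus "finite {J. e \<le> nr (R1 k z J)}" using fA finite_subset by blast
qed

end



context ctx begin

lemma subst1_PsiL_split: assumes "k \<notin> set xs" "k \<notin> set ys" "fin0 nr y"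
  shows "subst1 nr k (PsiL (xs @ k # ys) y) = PsiL (xs @ ys) (R1 k y)"
proof -
  have "subst1 nr k (PsiL (xs @ k # ys) y) = subst1 nr k (PsiL ys (Psi k (PsiL xs y)))"
    by (simp add: PsiL_append)
  also have "\<dots> = PsiL ys (subst1 nr k (Psi k (PsiL xs y)))"
    using assms by (intro subst1_PsiL_other fin0_Psi fin0_PsiL)
  also have "\<dots> = PsiL ys (R1 k (PsiL xs y))"
    using assms by (simp add: subst1_Psi_same fin0_PsiL)
  also have "\<dots> = PsiL ys (PsiL xs (R1 k y))" using assms by (simp add: R1_PsiL)
  finally show ?thesis by (simp add: PsiL_append)
qed

lemma ssum_single: assumes "\<And>m. m \<noteq> 0 \<Longrightarrow> a m = 0" shows "series_sum nr a = a 0"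
proof -
  have n: "null nr a" unfolding null_def
  proof (intro allI impI)
    fix e :: real assume e: "e > 0"
    show "\<exists>M. \<forall>m\<ge>M. nr (a m) < e"
      by (rule exI[of _ 1]) (use assms e in auto)
  qed
  have "(\<lambda>j. a (Suc j)) = (\<lambda>_. 0)" using assms by auto
  thus ?thesis using ssum_shift[OF n] by (simp add: ssum_zero)
qed

end

lemma upt_split: "1 \<le> k \<Longrightarrow> k \<le> n \<Longrightarrow> [1..<Suc n] = [1..<k] @ k # [Suc k..<Suc n]"
proof -
  assume k: "1 \<le> k" "k \<le> n"
  have "[1..<Suc n] = [1..<k + (Suc n - k)]" using k by simp
  also have "\<dots> = [1..<k] @ [k..<k + (Suc n - k)]" by (rule upt_add_eq_append[OF k(1)])
  also have "[k..<k + (Suc n - k)] = k # [Suc k..<Suc n]" using k by (simp add: upt_conv_Cons)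
  finally show ?thesis .
qed




theorem propositionA6:
  fixes nk :: "'k::field \<Rightarrow> real"
    and sm :: "'k \<Rightarrow> 'r::ring_1 \<Rightarrow> 'r"
    and nr :: "'r \<Rightarrow> real"
    and Rs :: "nat \<Rightarrow> 'r set"
    and n N :: nat
    and s :: "nat \<Rightarrow> 'r pseries"
    and e :: real
  assumes "complete_nonarch_field nk"
    and "banach_algebra nk sm nr"
    and "\<And>h. complete_subring nr (Rs h)"
    and "\<And>h. Rs h \<subseteq> Rs (Suc h)"
    and "\<And>x d. d > 0 \<Longrightarrow> \<exists>h. \<exists>y\<in>Rs h. nr (x - y) < d"
    and "\<And>a. a \<in> {1..N} \<Longrightarrow> tate nr n UNIV (s a)"
    and "e > 0"
  shows "\<exists>h. \<exists>t :: nat \<Rightarrow> 'r pseries.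
     (\<forall>a\<in>{1..N}. tate nr n (Rs h) (t a)) \<and>
     (\<forall>a\<in>{1..N}. gauss nr (\<lambda>I. s a I - t a I) < e) \<and>
     (\<forall>a\<in>{1..N}. \<forall>b\<in>{1..N}. \<forall>k\<in>{1..n}.
        subst0 k (s a) = subst0 k (s b) \<longrightarrow> subst0 k (t a) = subst0 k (t b)) \<and>
     (\<forall>a\<in>{1..N}. \<forall>b\<in>{1..N}. \<forall>k\<in>{1..n}.
        subst1 nr k (s a) = subst1 nr k (s b) \<longrightarrow> subst1 nr k (t a) = subst1 nr k (t b)) \<and>
     (\<forall>a\<in>{1..N}. (\<exists>h'. tate nr n (Rs h') (subst1 nr 1 (s a))) \<longrightarrow>
        subst1 nr 1 (t a) = subst1 nr 1 (s a))"
proof -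
  interpret ctx nk sm nr by (rule ctx.intro) (fact assms(1), fact assms(2))
  have e: "e > 0" by fact
  define \<delta> where "\<delta> = e / 2"
  have d: "\<delta> > 0" "\<delta> < e" using e unfolding \<delta>_def by auto
  define js where "js = [1..<Suc n]"
  have jsn: "set js \<subseteq> {1..n}" unfolding js_def by auto
  define P where "P a = PhiL nr js (s a)" for a
  have fin_s: "fin0 nr (s a)" if "a \<in> {1..N}" for a
    using assms(6)[OF that] unfolding tate_def fin0_def by blast
  have supp_s: "supp n (s a)" if "a \<in> {1..N}" for a
    using assms(6)[OF that] unfolding tate_def supp_def by blast
  have finP: "fin0 nr (P a)" if "a \<in> {1..N}" for a
    unfolding P_def using fin0_PhiL[OF fin_s[OF that]] .
  have suppP: "supp n (P a)" if "a \<in> {1..N}" for a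
    unfolding P_def using supp_PhiL[OF jsn supp_s[OF that]] .
  have sP: "PsiL js (P a) = s a" if "a \<in> {1..N}" for a
    unfolding P_def using PsiL_PhiL[OF fin_s[OF that]] .
  define Y where "Y = (\<Union>a\<in>{1..N}. P a ` {J. \<delta> \<le> nr (P a J)})"
  have finY: "finite Y" unfolding Y_def using finP d(1) unfolding fin0_def by blast
  have "\<forall>v. \<exists>hh. \<exists>y\<in>Rs hh. nr (v - y) < \<delta>" using assms(5)[OF d(1)] by blast
  then obtain hv where hv: "\<And>v. \<exists>y\<in>Rs (hv v). nr (v - y) < \<delta>"
    using choice[of "\<lambda>v hh. \<exists>y\<in>Rs hh. nr (v - y) < \<delta>"] by blast
  define Q where "Q a \<longleftrightarrow> (\<exists>h'. tate nr n (Rs h') (subst1 nr 1 (s a)))" for a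
  define hc where "hc a = (SOME h'. tate nr n (Rs h') (subst1 nr 1 (s a)))" for a
  have hc: "tate nr n (Rs (hc a)) (subst1 nr 1 (s a))" if "Q a" for a
    using that unfolding Q_def hc_def by (rule someI_ex)
  define H where "H = insert 0 (hv ` Y \<union> hc ` {a\<in>{1..N}. Q a})"
  have finH: "finite H" unfolding H_def using finY by auto
  define h where "h = Max H"
  have mono: "Rs i \<subseteq> Rs j" if "i \<le> j" for i j
    using lift_Suc_mono_le[of Rs, OF assms(4) that] .
  have hv_le: "Rs (hv v) \<subseteq> Rs h" if "v \<in> Y" for v
    using that finH unfolding h_def H_def by (intro mono Max_ge) auto
  have hc_le: "Rs (hc a) \<subseteq> Rs h" if "a \<in> {1..N}" "Q a" for a
    using that finH unfolding h_def H_def by (intro mono Max_ge) auto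
  have cR: "complete_subring nr (Rs h)" by fact
  have sR: "subring_of (Rs h)" using cR unfolding complete_subring_def by blast
  have z: "0 \<in> Rs h" using sR unfolding subring_of_def by blast
  define g where "g v = (if v \<in> Rs h then v else if nr v < \<delta> then 0
     else (SOME y. y \<in> Rs h \<and> nr (v - y) < \<delta>))" for v
  have g0: "g 0 = 0" using z unfolding g_def by simp
  have gfix: "g v = v" if "v \<in> Rs h" for v using that unfolding g_def by simp
  have gP: "g (P a J) \<in> Rs h \<and> nr (P a J - g (P a J)) < \<delta> \<and> nr (g (P a J)) \<le> nr (P a J)"
    if a: "a \<in> {1..N}" for a J
  proof -
    define v where "v = P a J"
    have "g v \<in> Rs h \<and> nr (v - g v) < \<delta> \<and> nr (g v) \<le> nr v"
    proof (cases "v \<in> Rs h")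
      case True thus ?thesis using d unfolding g_def by simp
    next
      case F: False
      show ?thesis
      proof (cases "nr v < \<delta>")
        case True thus ?thesis using F z nr_nonneg[of v] unfolding g_def by simp
      next
        case False
        hence "J \<in> {J. \<delta> \<le> nr (P a J)}" unfolding v_def by simp
        hence vY: "v \<in> Y" unfolding Y_def v_def using a by blast
        then obtain y where "y \<in> Rs h" "nr (v - y) < \<delta>" using hv[of v] hv_le[OF vY] by blast
        hence ex: "\<exists>y. y \<in> Rs h \<and> nr (v - y) < \<delta>" by blast
        have gv: "g v = (SOME y. y \<in> Rs h \<and> nr (v - y) < \<delta>)" using F False unfolding g_def by simp
        have G: "g v \<in> Rs h \<and> nr (v - g v) < \<delta>" unfolding gv using someI_ex[OF ex] .
        have "g v = v + - (v - g v)" by simp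
        hence "nr (g v) \<le> max (nr v) (nr (- (v - g v)))" using ultra[of v "- (v - g v)"] by (simp only:)
        hence "nr (g v) \<le> max (nr v) (nr (v - g v))" by (simp only: nr_minus)
        thus ?thesis using G False by simp
      qed
    qed
    thus ?thesis unfolding v_def .
  qed
  define x where "x a = (\<lambda>J. g (P a J))" for a
  define t where "t a = PsiL js (x a)" for a
  have fin_x: "fin0 nr (x a)" if a: "a \<in> {1..N}" for a
    unfolding fin0_def
  proof (intro allI impI)
    fix \<epsilon> :: real assume "\<epsilon> > 0"
    hence "finite {J. \<epsilon> \<le> nr (P a J)}" using finP[OF a] unfolding fin0_def by blast
    moreover have "{J. \<epsilon> \<le> nr (x a J)} \<subseteq> {J. \<epsilon> \<le> nr (P a J)}"
      using gP[OF a] unfolding x_def by (auto intro: order_trans)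
    ultimately show "finite {J. \<epsilon> \<le> nr (x a J)}" using finite_subset by blast
  qed
  have c1: "\<forall>a\<in>{1..N}. tate nr n (Rs h) (t a)"
  proof
    fix a assume a: "a \<in> {1..N}"
    have v: "\<forall>I. t a I \<in> Rs h" unfolding t_def
      using PsiL_in[OF sR, of "x a"] gP[OF a] unfolding x_def by blast
    have "supp n (x a)" unfolding supp_def
    proof (intro allI impI)
      fix J i assume "x a J \<noteq> 0" "i \<notin> {1..n}"
      hence "P a J \<noteq> 0" unfolding x_def using g0 by auto
      thus "J i = 0" using suppP[OF a] \<open>i \<notin> {1..n}\<close> unfolding supp_def by blast
    qed
    hence sp: "supp n (t a)" unfolding t_def by (rule supp_PsiL[OF jsn])
    have f: "fin0 nr (t a)" unfolding t_def by (rule fin0_PsiL[OF fin_x[OF a]])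
    show "tate nr n (Rs h) (t a)" using v sp f unfolding tate_def supp_def fin0_def by blast
  qed
  have c2: "\<forall>a\<in>{1..N}. gauss nr (\<lambda>I. s a I - t a I) < e"
  proof
    fix a assume a: "a \<in> {1..N}"
    have eq: "(\<lambda>I. s a I - t a I) = PsiL js (\<lambda>J. P a J - x a J)"
      unfolding PsiL_diff t_def using sP[OF a] by simp
    have lt: "nr (PsiL js (\<lambda>J. P a J - x a J) I) < \<delta>" for I
      by (rule PsiL_lt) (use gP[OF a] in \<open>simp add: x_def\<close>)
    have "gauss nr (\<lambda>I. s a I - t a I) \<le> \<delta>"
      unfolding gauss_def eq by (rule cSup_least) (use lt in \<open>auto intro: less_imp_le\<close>)
    thus "gauss nr (\<lambda>I. s a I - t a I) < e" using d by simp
  qed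
  have c3: "\<forall>a\<in>{1..N}. \<forall>b\<in>{1..N}. \<forall>k\<in>{1..n}.
        subst0 k (s a) = subst0 k (s b) \<longrightarrow> subst0 k (t a) = subst0 k (t b)"
  proof (intro ballI impI)
    fix a b k assume a: "a \<in> {1..N}" and b: "b \<in> {1..N}" and k: "k \<in> {1..n}"
      and eq: "subst0 k (s a) = subst0 k (s b)"
    have "\<forall>J. J k = 0 \<longrightarrow> s a J = s b J"
      using eq unfolding subst0_def by (metis (mono_tags, lifting))
    hence "\<forall>J. J k = 0 \<longrightarrow> P a J = P b J" unfolding P_def by (rule agree_PhiL)
    hence "\<forall>J. J k = 0 \<longrightarrow> x a J = x b J" unfolding x_def by simp
    hence "\<forall>J. J k = 0 \<longrightarrow> t a J = t b J" unfolding t_def by (rule agree_PsiL)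
    thus "subst0 k (t a) = subst0 k (t b)" unfolding subst0_def by auto
  qed
  have c4: "\<forall>a\<in>{1..N}. \<forall>b\<in>{1..N}. \<forall>k\<in>{1..n}.
        subst1 nr k (s a) = subst1 nr k (s b) \<longrightarrow> subst1 nr k (t a) = subst1 nr k (t b)"
  proof (intro ballI impI)
    fix a b k assume a: "a \<in> {1..N}" and b: "b \<in> {1..N}" and k: "k \<in> {1..n}"
      and eq: "subst1 nr k (s a) = subst1 nr k (s b)"
    define xs where "xs = [1..<k]"
    define ys where "ys = [Suc k..<Suc n]"
    have js: "js = xs @ k # ys" unfolding js_def xs_def ys_def using k by (intro upt_split) auto
    have nin: "k \<notin> set xs" "k \<notin> set ys" unfolding xs_def ys_def by auto
    have spl: "subst1 nr k (PsiL js y) = PsiL (xs @ ys) (R1 k y)" if "fin0 nr y" for y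
      unfolding js using subst1_PsiL_split[OF nin that] .
    have "PsiL (xs @ ys) (R1 k (P a)) = PsiL (xs @ ys) (R1 k (P b))"
      using eq spl[OF finP[OF a]] spl[OF finP[OF b]] sP[OF a] sP[OF b] by simp
    hence "PhiL nr (xs @ ys) (PsiL (xs @ ys) (R1 k (P a))) = PhiL nr (xs @ ys) (PsiL (xs @ ys) (R1 k (P b)))"
      by simp
    hence R: "R1 k (P a) = R1 k (P b)"
      using PhiL_PsiL[OF fin0_R1[OF finP[OF a]]] PhiL_PsiL[OF fin0_R1[OF finP[OF b]]] by simp
    have "R1 k (x a) = R1 k (x b)"
    proof (rule ext)
      fix I show "R1 k (x a) I = R1 k (x b) I"
        using fun_cong[OF R, of I] unfolding R1_def x_def by (auto split: if_splits)
    qed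
    thus "subst1 nr k (t a) = subst1 nr k (t b)"
      unfolding t_def using spl[OF fin_x[OF a]] spl[OF fin_x[OF b]] by simp
  qed
  have c5: "\<forall>a\<in>{1..N}. (\<exists>h'. tate nr n (Rs h') (subst1 nr 1 (s a))) \<longrightarrow>
        subst1 nr 1 (t a) = subst1 nr 1 (s a)"
  proof (intro ballI impI)
    fix a assume a: "a \<in> {1..N}" and ex: "\<exists>h'. tate nr n (Rs h') (subst1 nr 1 (s a))"
    have Qa: "Q a" using ex unfolding Q_def .
    have tu: "tate nr n (Rs (hc a)) (subst1 nr 1 (s a))" using hc[OF Qa] .
    have uin: "subst1 nr 1 (s a) I \<in> Rs h" for I
      using tu hc_le[OF a Qa] unfolding tate_def by blast
    show "subst1 nr 1 (t a) = subst1 nr 1 (s a)"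
    proof (cases "n = 0")
      case True
      hence js0: "js = []" unfolding js_def by simp
      have "x a = s a"
      proof (rule ext)
        fix J
        show "x a J = s a J"
        proof (cases "s a J = 0")
          case True thus ?thesis unfolding x_def P_def js0 using g0 by simp
        next
          case False
          hence J0: "J = (\<lambda>_. 0)" using supp_s[OF a] \<open>n = 0\<close> unfolding supp_def by auto
          have "\<And>m. m \<noteq> 0 \<Longrightarrow> s a (J(1:=m)) = 0"
          proof -
            fix m :: nat assume "m \<noteq> 0"
            hence nz: "(J(1:=m)) 1 \<noteq> 0" by simp
            have sp: "\<forall>I. s a I \<noteq> 0 \<longrightarrow> (\<forall>i. i \<notin> {1..n} \<longrightarrow> I i = 0)"
              using supp_s[OF a] unfolding supp_def .
            have one: "(1::nat) \<notin> {1..n}" using \<open>n = 0\<close> by simp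
            show "s a (J(1:=m)) = 0"
            proof (rule ccontr)
              assume "s a (J(1:=m)) \<noteq> 0"
              from sp[rule_format, OF this one] nz show False by simp
            qed
          qed
          hence "subst1 nr 1 (s a) J = s a (J(1:=0))"
            unfolding subst1_def using J0 ssum_single[of "\<lambda>m. s a (J(1:=m))"] by simp
          moreover have "J(1:=0) = J" using J0 by auto
          ultimately have "s a J \<in> Rs h" using uin[of J] by simp
          thus ?thesis unfolding x_def P_def js0 using gfix by simp
        qed
      qed
      thus ?thesis unfolding t_def js0 by simp
    next
      case False
      define ys where "ys = [Suc 1..<Suc n]"
      have "js = [1..<1] @ 1 # ys" unfolding js_def ys_def using False by (intro upt_split) auto
      hence js: "js = [] @ 1 # ys" by simp
      have nin: "1 \<notin> set []" "1 \<notin> set ys" unfolding ys_def by auto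
      have spl: "subst1 nr 1 (PsiL js y) = PsiL ys (R1 1 y)" if "fin0 nr y" for y
        unfolding js using subst1_PsiL_split[OF nin that] by simp
      define u where "u = subst1 nr 1 (s a)"
      have u: "u = PsiL ys (R1 1 (P a))" unfolding u_def using spl[OF finP[OF a]] sP[OF a] by simp
      have R: "R1 1 (P a) = PhiL nr ys u"
        unfolding u using PhiL_PsiL[OF fin0_R1[OF finP[OF a]]] by simp
      have finu: "fin0 nr u" using tu unfolding u_def tate_def fin0_def by blast
      have Rin: "R1 1 (P a) I \<in> Rs h" for I
      proof -
        have "PhiL nr ys u I \<in> Rs (hc a)"
          using PhiL_in[OF assms(3) _ finu] tu unfolding u_def tate_def by blast
        thus ?thesis using R hc_le[OF a Qa] by auto
      qed
      have Rx: "R1 1 (x a) = R1 1 (P a)"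
      proof (rule ext)
        fix I show "R1 1 (x a) I = R1 1 (P a) I"
          using Rin[of I] gfix unfolding R1_def x_def by (auto split: if_splits)
      qed
      show ?thesis unfolding t_def using spl[OF fin_x[OF a]] Rx u unfolding u_def by simp
    qed
  qed
  show ?thesis by (intro exI[of _ h] exI[of _ t] conjI c1 c2 c3 c4 c5)
qed


end
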